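(* Let $W,\widetilde W\in\mathbb R^{n\times m}$ and let $D,\widetilde D$ be the $n\times n$ diagonal matrices with $D_{ii}=\sum_{j=1}^n\sum_{k=1}^mW_{ik}W_{jk}$ and $\widetilde D_{ii}=\sum_{j=1}^n\sum_{k=1}^m\widetilde W_{ik}\widetilde W_{jk}$, both assumed invertible with positive diagonals. Suppose $\sup_{i,k}|W_{ik}-\widetilde W_{ik}|\le\delta$, $0\le W_{ik}\le C$ for some $C>0$, and $\inf_iD_{ii}/(mn)>\gamma$ with $\gamma>2C\delta+\delta^2$. Then both $\|D^{-1/2}W-\widetilde D^{-1/2}\widetilde W\|_2$ and $\|D^{-1/2}W-\widetilde D^{-1/2}\widetilde W\|_F$ are bounded by $$\frac{\delta}{\sqrt\gamma}+\frac{(2C\delta+\delta^2)(C+\delta)}{\gamma\sqrt{\gamma-2C\delta-\delta^2}+\sqrt\gamma(\gamma-2C\delta-\delta^2)}.$$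
   Context: $\|\cdot\|_2$ is the operator (spectral) norm and $\|\cdot\|_F$ the Frobenius norm. *)

theory Defs
  imports "HOL-Analysis.Analysis"
begin

definition deg :: "real^'m^'n \<Rightarrow> 'n \<Rightarrow> real" where
  "deg W i = (\<Sum>j\<in>UNIV. \<Sum>k\<in>UNIV. W$i$k * W$j$k)"

definition diag_mat :: "('n \<Rightarrow> real) \<Rightarrow> real^'n^'n" where
  "diag_mat d = (\<chi> i j. if i = j then d i else 0)"

definition deg_mat :: "real^'m^'n \<Rightarrow> real^'n^'n" where
  "deg_mat W = diag_mat (deg W)"

definition deg_mat_inv_sqrt :: "real^'m^'n \<Rightarrow> real^'n^'n" where
  "deg_mat_inv_sqrt W = diag_mat (\<lambda>i. 1 / sqrt (deg W i))"

definition op_norm :: "real^'m^'n \<Rightarrow> real" where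
  "op_norm A = onorm (\<lambda>x. A *v x)"

definition frob_norm :: "real^'m^'n \<Rightarrow> real" where
  "frob_norm A = sqrt (\<Sum>i\<in>UNIV. \<Sum>j\<in>UNIV. (A$i$j)^2)"

end

theory Submission imports Defs begin

lemma norm_mat_eq: fixes X :: "real^'m^'n"
  shows "norm X = sqrt (\<Sum>i\<in>UNIV. \<Sum>j\<in>UNIV. (X$i$j)^2)"
  unfolding norm_vec_def L2_set_def
  by (simp add: sum_nonneg)

lemma frob_eq: "frob_norm X = norm X"
  unfolding frob_norm_def norm_mat_eq ..

lemma mat_vec_norm_le: fixes A :: "real^'m^'n"
  shows "norm (A *v x) \<le> norm A * norm x"
proof -
  have "norm (A *v x) = sqrt (\<Sum>i\<in>UNIV. ((A$i) \<bullet> x)^2)"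
    unfolding norm_vec_def L2_set_def matrix_mult_dot by simp
  also have "\<dots> \<le> sqrt (\<Sum>i\<in>UNIV. (norm (A$i))^2 * (norm x)^2)"
  proof (rule real_sqrt_le_mono, rule sum_mono)
    fix i
    have "\<bar>A$i \<bullet> x\<bar> \<le> norm (A$i) * norm x" by (rule Cauchy_Schwarz_ineq2)
    then have "\<bar>A$i \<bullet> x\<bar>^2 \<le> (norm (A$i) * norm x)^2"
      by (rule power_mono) simp
    then show "(A$i \<bullet> x)^2 \<le> (norm (A$i))^2 * (norm x)^2"
      by (simp add: power_mult_distrib)
  qed
  also have "\<dots> = sqrt (\<Sum>i\<in>UNIV. (norm (A$i))^2) * norm x"
    by (simp add: sum_distrib_right[symmetric] real_sqrt_mult)
  also have "\<dots> = norm A * norm x"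
    unfolding norm_vec_def[of A] L2_set_def by simp
  finally show ?thesis .
qed

lemma op_le_frob: fixes A :: "real^'m^'n"
  shows "op_norm A \<le> frob_norm A"
  unfolding op_norm_def frob_eq
  by (rule onorm_le) (simp add: mat_vec_norm_le)

lemma mat_norm_bound: fixes X :: "real^'m^'n"
  assumes "\<And>i k. \<bar>X$i$k\<bar> \<le> b"
  shows "norm X \<le> sqrt (real CARD('m) * real CARD('n)) * b"
proof -
  have b0: "0 \<le> b" using assms[of undefined undefined] by linarith
  have "norm X \<le> sqrt (\<Sum>i\<in>(UNIV::'n set). \<Sum>j\<in>(UNIV::'m set). b^2)"
    unfolding norm_mat_eq
  proof (rule real_sqrt_le_mono, rule sum_mono, rule sum_mono)
    fix i j
    have "\<bar>X$i$j\<bar>^2 \<le> b^2" by (rule power_mono[OF assms]) simp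
    then show "(X$i$j)^2 \<le> b^2" by simp
  qed
  also have "\<dots> = sqrt (real CARD('m) * real CARD('n)) * b"
    using b0 by (simp add: real_sqrt_mult mult.commute)
  finally show ?thesis .
qed

lemma diag_mult: "(diag_mat d ** X)$i$k = d i * X$i$k"
proof -
  have h: "\<And>ka. (if i = ka then d i else 0) * X$ka$k = (if i = ka then d i * X$ka$k else 0)"
    by simp
  have "(diag_mat d ** X)$i$k = (\<Sum>ka\<in>UNIV. (if i = ka then d i else 0) * X$ka$k)"
    unfolding diag_mat_def matrix_matrix_mult_def
    by (auto intro!: sum.cong)
  also have "\<dots> = (\<Sum>ka\<in>UNIV. if i = ka then d i * X$ka$k else 0)"
    by (simp only: h)
  also have "\<dots> = d i * X$i$k" by simp
  finally show ?thesis .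
qed

lemma inv_sqrt_bound:
  fixes a b g e :: real
  assumes "a > g" "b \<ge> g - e" "g - e > 0" "\<bar>a - b\<bar> \<le> e"
  shows "\<bar>1/sqrt a - 1/sqrt b\<bar> \<le> e / (g * sqrt (g - e) + sqrt g * (g - e))"
proof -
  have e0: "e \<ge> 0" using assms by linarith
  have g0: "g > 0" using assms e0 by linarith
  have a0: "a > 0" "b > 0" using assms g0 by linarith+
  define sa where "sa = sqrt a"
  define sb where "sb = sqrt b"
  have sa: "sa > 0" "sa^2 = a" using a0 by (simp_all add: sa_def)
  have sb: "sb > 0" "sb^2 = b" using a0 by (simp_all add: sb_def)
  have eq0: "1/sa - 1/sb = (sb * sb - sa * sa) / (sa * sa * sb + sa * (sb * sb))"
  proof -
    have "sa * sa * sb + sa * (sb * sb) = (sa * sb) * (sa + sb)" by algebra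
    moreover have "sb * sb - sa * sa = (sb - sa) * (sa + sb)" by algebra
    moreover have "sa + sb \<noteq> 0" using sa sb by simp
    ultimately have "(sb * sb - sa * sa) / (sa * sa * sb + sa * (sb * sb)) = (sb - sa) / (sa * sb)"
      by simp
    also have "\<dots> = 1/sa - 1/sb" using sa sb by (simp add: field_simps)
    finally show ?thesis by simp
  qed
  have eq: "1/sqrt a - 1/sqrt b = (b - a) / (a * sb + sa * b)"
    using eq0 sa(1) sb(1) unfolding sa_def[symmetric] sb_def[symmetric] sa(2)[symmetric] sb(2)[symmetric]
    by (simp add: power2_eq_square)
  have d1: "g * sqrt (g - e) \<le> a * sb"
    by (rule mult_mono) (use assms a0 g0 in \<open>auto simp: sb_def\<close>)
  have d2: "sqrt g * (g - e) \<le> sa * b"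
    by (rule mult_mono) (use assms a0 g0 in \<open>auto simp: sa_def\<close>)
  have dpos: "g * sqrt (g - e) + sqrt g * (g - e) > 0" using assms g0 by (simp add: add_pos_pos)
  have "\<bar>1/sqrt a - 1/sqrt b\<bar> = \<bar>a - b\<bar> / (a * sb + sa * b)"
    using eq sa sb a0 by (simp add: abs_minus_commute)
  also have "\<dots> \<le> e / (a * sb + sa * b)"
    by (rule divide_right_mono) (use assms sa sb a0 in auto)
  also have "\<dots> \<le> e / (g * sqrt (g - e) + sqrt g * (g - e))"
    by (rule divide_left_mono) (use e0 d1 d2 dpos in auto)
  finally show ?thesis .
qed

lemma prod_diff_bound:
  fixes x y u v c dd :: real
  assumes "0 \<le> x" "x \<le> c" "0 \<le> y" "y \<le> c" "\<bar>x - u\<bar> \<le> dd" "\<bar>y - v\<bar> \<le> dd"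
  shows "\<bar>x*y - u * v\<bar> \<le> 2*c*dd + dd^2"
proof -
  define p where "p = u - x"
  define q where "q = v - y"
  have "x*y - u * v = -(x*q + p*y + p*q)" by (simp add: p_def q_def algebra_simps)
  then have "\<bar>x*y - u * v\<bar> \<le> \<bar>x*q\<bar> + \<bar>p*y\<bar> + \<bar>p*q\<bar>" by simp
  also have "\<dots> \<le> c*dd + dd*c + dd*dd"
    using assms unfolding p_def q_def abs_mult
    by (intro add_mono mult_mono) (auto simp: abs_minus_commute)
  finally show ?thesis by (simp add: power2_eq_square)
qed


theorem mainTheorem14:
  fixes W Wt :: "real^'m^'n" and \<delta> C \<gamma> :: real
  assumes "invertible (deg_mat W)" and "invertible (deg_mat Wt)"
    and "\<forall>i. deg W i > 0" and "\<forall>i. deg Wt i > 0"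
    and "(SUP p\<in>UNIV. \<bar>W $ fst p $ snd p - Wt $ fst p $ snd p\<bar>) \<le> \<delta>"
    and "C > 0" and "\<forall>i k. 0 \<le> W$i$k \<and> W$i$k \<le> C"
    and "(INF i\<in>UNIV. deg W i / (real CARD('m) * real CARD('n))) > \<gamma>"
    and "\<gamma> > 2*C*\<delta> + \<delta>^2"
  shows "op_norm (deg_mat_inv_sqrt W ** W - deg_mat_inv_sqrt Wt ** Wt)
           \<le> \<delta> / sqrt \<gamma> + (2*C*\<delta> + \<delta>^2) * (C + \<delta>) /
              (\<gamma> * sqrt (\<gamma> - 2*C*\<delta> - \<delta>^2) + sqrt \<gamma> * (\<gamma> - 2*C*\<delta> - \<delta>^2))
       \<and> frob_norm (deg_mat_inv_sqrt W ** W - deg_mat_inv_sqrt Wt ** Wt)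
           \<le> \<delta> / sqrt \<gamma> + (2*C*\<delta> + \<delta>^2) * (C + \<delta>) /
              (\<gamma> * sqrt (\<gamma> - 2*C*\<delta> - \<delta>^2) + sqrt \<gamma> * (\<gamma> - 2*C*\<delta> - \<delta>^2))"
proof -
  define N where "N = real CARD('m) * real CARD('n)"
  define \<epsilon> where "\<epsilon> = 2*C*\<delta> + \<delta>^2"
  define den where "den = \<gamma> * sqrt (\<gamma> - 2*C*\<delta> - \<delta>^2) + sqrt \<gamma> * (\<gamma> - 2*C*\<delta> - \<delta>^2)"
  have den': "den = \<gamma> * sqrt (\<gamma> - \<epsilon>) + sqrt \<gamma> * (\<gamma> - \<epsilon>)"
    unfolding den_def \<epsilon>_def by (simp add: algebra_simps)
  have N0: "N > 0" unfolding N_def by simp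
  have hd: "\<bar>W$i$k - Wt$i$k\<bar> \<le> \<delta>" for i k
  proof -
    have "\<bar>W $ fst (i,k) $ snd (i,k) - Wt $ fst (i,k) $ snd (i,k)\<bar>
          \<le> (SUP p\<in>UNIV. \<bar>W $ fst p $ snd p - Wt $ fst p $ snd p\<bar>)"
      by (rule cSUP_upper) (auto intro: bdd_above_finite)
    then show ?thesis using assms(5) by simp
  qed
  have d0: "\<delta> \<ge> 0" using hd[of undefined undefined] by linarith
  have e0: "\<epsilon> \<ge> 0" unfolding \<epsilon>_def using d0 assms(6) by simp
  have ge: "\<gamma> - \<epsilon> > 0" using assms(9) unfolding \<epsilon>_def by simp
  have g0: "\<gamma> > 0" using ge e0 by linarith
  have hdeg: "deg W i / N > \<gamma>" for i
  proof -
    have "(INF i\<in>UNIV. deg W i / N) \<le> deg W i / N"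
      by (rule cINF_lower) (auto intro: bdd_below_finite)
    then show ?thesis using assms(8) unfolding N_def by simp
  qed
  have degdiff: "\<bar>deg W i - deg Wt i\<bar> \<le> N * \<epsilon>" for i
  proof -
    have "\<bar>deg W i - deg Wt i\<bar> = \<bar>\<Sum>j\<in>UNIV. \<Sum>k\<in>UNIV. (W$i$k * W$j$k - Wt$i$k * Wt$j$k)\<bar>"
      unfolding deg_def by (simp add: sum_subtractf)
    also have "\<dots> \<le> (\<Sum>j\<in>UNIV. \<Sum>k\<in>UNIV. \<bar>W$i$k * W$j$k - Wt$i$k * Wt$j$k\<bar>)"
      by (rule order_trans[OF sum_abs], rule sum_mono, rule sum_abs)
    also have "\<dots> \<le> (\<Sum>j\<in>(UNIV::'n set). \<Sum>k\<in>(UNIV::'m set). \<epsilon>)"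
      unfolding \<epsilon>_def
      by (intro sum_mono prod_diff_bound) (use assms(7) hd in auto)
    also have "\<dots> = N * \<epsilon>" unfolding N_def by simp
    finally show ?thesis .
  qed
  define E1 :: "real^'m^'n" where "E1 = (\<chi> i k. (W$i$k - Wt$i$k) / sqrt (deg W i))"
  define E2 :: "real^'m^'n" where
    "E2 = (\<chi> i k. Wt$i$k * (1 / sqrt (deg W i) - 1 / sqrt (deg Wt i)))"
  have split: "deg_mat_inv_sqrt W ** W - deg_mat_inv_sqrt Wt ** Wt = E1 + E2"
    unfolding vec_eq_iff E1_def E2_def deg_mat_inv_sqrt_def
    by (simp add: diag_mult diff_divide_distrib algebra_simps)
  have sN: "sqrt N > 0" using N0 by simp
  have nE1: "norm E1 \<le> \<delta> / sqrt \<gamma>"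
  proof -
    have "norm E1 \<le> sqrt N * (\<delta> / (sqrt N * sqrt \<gamma>))"
      unfolding N_def
    proof (rule mat_norm_bound)
      fix i k
      have dpos: "deg W i \<ge> N * \<gamma>" using hdeg[of i] N0 by (simp add: field_simps)
      have "sqrt (N * \<gamma>) \<le> sqrt (deg W i)" using dpos by simp
      moreover have "sqrt (N * \<gamma>) > 0" using N0 g0 by simp
      ultimately have "\<bar>W$i$k - Wt$i$k\<bar> / sqrt (deg W i) \<le> \<delta> / sqrt (N * \<gamma>)"
        using hd[of i k] d0 by (intro frac_le) auto
      then show "\<bar>E1$i$k\<bar> \<le> \<delta> / (sqrt (real CARD('m) * real CARD('n)) * sqrt \<gamma>)"
        using assms(3)[rule_format, of i] unfolding E1_def N_def by (simp add: real_sqrt_mult abs_div)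
    qed
    also have "\<dots> = \<delta> / sqrt \<gamma>" using sN by simp
    finally show ?thesis .
  qed
  have nE2: "norm E2 \<le> \<epsilon> * (C + \<delta>) / den"
  proof -
    have "norm E2 \<le> sqrt N * ((C + \<delta>) * (\<epsilon> / (sqrt N * den)))"
      unfolding N_def
    proof (rule mat_norm_bound)
      fix i k
      define a where "a = deg W i / N"
      define b where "b = deg Wt i / N"
      have da: "deg W i = N * a" "deg Wt i = N * b" unfolding a_def b_def using N0 by simp_all
      have ab: "\<bar>a - b\<bar> \<le> \<epsilon>" unfolding a_def b_def using degdiff[of i] N0
        by (simp add: diff_divide_distrib[symmetric] abs_div field_simps)
      have ag: "a > \<gamma>" using hdeg[of i] unfolding a_def .
      have "b \<ge> \<gamma> - \<epsilon>" using ab ag by linarith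
      then have inv: "\<bar>1/sqrt a - 1/sqrt b\<bar> \<le> \<epsilon> / den"
        unfolding den' using inv_sqrt_bound[OF ag _ ge ab] by simp
      have "1 / sqrt (deg W i) - 1 / sqrt (deg Wt i) = (1/sqrt a - 1/sqrt b) / sqrt N"
        unfolding da by (simp add: real_sqrt_mult diff_divide_distrib mult.commute)
      then have h2: "\<bar>1 / sqrt (deg W i) - 1 / sqrt (deg Wt i)\<bar> \<le> \<epsilon> / den / sqrt N"
      proof -
        have "\<bar>1/sqrt a - 1/sqrt b\<bar> / sqrt N \<le> \<epsilon> / den / sqrt N"
          by (rule divide_right_mono[OF inv]) (use sN in simp)
        then show ?thesis using \<open>1 / sqrt (deg W i) - 1 / sqrt (deg Wt i) = _\<close> sN
          by (simp add: abs_div)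
      qed
      have hw: "\<bar>Wt$i$k\<bar> \<le> C + \<delta>" using hd[of i k] assms(7)[rule_format, of i k] by linarith
      have "\<bar>E2$i$k\<bar> = \<bar>Wt$i$k\<bar> * \<bar>1 / sqrt (deg W i) - 1 / sqrt (deg Wt i)\<bar>"
        unfolding E2_def by (simp add: abs_mult)
      also have "\<dots> \<le> (C + \<delta>) * (\<epsilon> / den / sqrt N)"
        by (rule mult_mono[OF hw h2]) (use d0 assms(6) in auto)
      finally show "\<bar>E2$i$k\<bar> \<le> (C + \<delta>) * (\<epsilon> / (sqrt (real CARD('m) * real CARD('n)) * den))"
        unfolding N_def by (simp add: field_simps)
    qed
    also have "\<dots> = \<epsilon> * (C + \<delta>) / den"
    proof -
      have "den > 0" unfolding den' using ge g0 by (simp add: add_pos_pos)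
      then show ?thesis using sN by (simp add: field_simps)
    qed
    finally show ?thesis .
  qed
  have fr: "frob_norm (deg_mat_inv_sqrt W ** W - deg_mat_inv_sqrt Wt ** Wt)
      \<le> \<delta> / sqrt \<gamma> + \<epsilon> * (C + \<delta>) / den"
    unfolding frob_eq split using norm_triangle_ineq[of E1 E2] nE1 nE2 by linarith
  show ?thesis using fr op_le_frob[of "deg_mat_inv_sqrt W ** W - deg_mat_inv_sqrt Wt ** Wt"]
    unfolding \<epsilon>_def den_def by linarith
qed

end
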